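(* For integers $k\ge1$ and $q\ge2$, \[ \sum_{n=1}^\infty\frac{P_k(H_n,H_n^{(2)},\dots,H_n^{(k)})}{n(n+1)\cdots(n+q-1)}=\frac{1}{(q-1)!}\Big[\zeta(k+1)-\sum_{j=1}^{q-2}\frac{1}{j^{k+1}}\Big]. \]
   Context: For integers $r\ge1$ and $n\ge0$, $H_n^{(r)}=\sum_{j=1}^n j^{-r}$ and $H_n=H_n^{(1)}$. For $n\ge1$, $P_n(y_1,\dots,y_n)=\sum_{m_1+2m_2+\cdots=n}\frac{(-1)^{m_2+m_4+\cdots}}{m_1!m_2!\cdots}\prod_{i\ge1}(y_i/i)^{m_i}$. $\zeta$ is the Riemann zeta function. *)

theory Defs
  imports "HOL-Analysis.Analysis"
begin

definition gen_harm :: "nat \<Rightarrow> nat \<Rightarrow> real" where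
  "gen_harm r n = (\<Sum>j=1..n. 1 / (real j) ^ r)"

text \<open>Riemann zeta at an integer s (meant for s \<ge> 2), via its defining series.\<close>
definition zeta_nat :: "nat \<Rightarrow> real" where
  "zeta_nat s = (\<Sum>j. 1 / (real (Suc j)) ^ s)"

definition partition_vecs :: "nat \<Rightarrow> (nat \<Rightarrow> nat) set" where
  "partition_vecs n = {m. (\<forall>i. (i < 1 \<or> n < i) \<longrightarrow> m i = 0) \<and> (\<Sum>i=1..n. i * m i) = n}"

definition Pn :: "nat \<Rightarrow> (nat \<Rightarrow> real) \<Rightarrow> real" where
  "Pn n y = (\<Sum>m\<in>partition_vecs n.
      (-1) ^ (\<Sum>i\<in>{i\<in>{1..n}. even i}. m i) / (\<Prod>i=1..n. fact (m i))
      * (\<Prod>i=1..n. (y i / real i) ^ (m i)))"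

end

theory Submission
  imports Defs
begin

definition cterm :: "nat \<Rightarrow> (nat \<Rightarrow> real) \<Rightarrow> (nat \<Rightarrow> nat) \<Rightarrow> real" where
 "cterm n y m = (-1) ^ (\<Sum>i\<in>{i\<in>{1..n}. even i}. m i) / (\<Prod>i=1..n. fact (m i))
      * (\<Prod>i=1..n. (y i / real i) ^ (m i))"

lemma Pn_cterm: "Pn n y = (\<Sum>m\<in>partition_vecs n. cterm n y m)"
  by (simp add: Pn_def cterm_def)

lemma cterm_ext:
  assumes "\<forall>i. n < i \<longrightarrow> m i = 0" "n \<le> N"
  shows "cterm N y m = cterm n y m"
proof -
  have aux: "\<And>i. 0 < m i \<Longrightarrow> i \<le> n" by (metis assms(1) gr_implies_not0 not_le)
  have aux2: "\<And>i. n < i \<Longrightarrow> m i = 0" using assms(1) by blast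
  have 1: "(\<Sum>i\<in>{i\<in>{1..N}. even i}. m i) = (\<Sum>i\<in>{i\<in>{1..n}. even i}. m i)"
    by (rule sum.mono_neutral_right) (use assms(2) aux aux2 in force)+
  have 2: "(\<Prod>i=1..N. fact (m i) :: real) = (\<Prod>i=1..n. fact (m i))"
    by (rule prod.mono_neutral_right) (use assms(2) aux aux2 in force)+
  have 3: "(\<Prod>i=1..N. (y i / real i) ^ (m i)) = (\<Prod>i=1..n. (y i / real i) ^ (m i))"
    by (rule prod.mono_neutral_right) (use assms(2) aux aux2 in force)+
  show ?thesis unfolding cterm_def 1 2 3 ..
qed

lemma PV_le:
  assumes "m \<in> partition_vecs n" "i \<in> {1..n}"
  shows "i * m i \<le> n"
proof -
  have "i * m i \<le> (\<Sum>i=1..n. i * m i)" by (rule member_le_sum) (use assms in auto)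
  thus ?thesis using assms by (simp add: partition_vecs_def)
qed

lemma finite_PV: "finite (partition_vecs n)"
proof -
  have "partition_vecs n \<subseteq> (\<lambda>f i. if i \<le> n then f i else 0) ` ({..n} \<rightarrow>\<^sub>E {..n})"
  proof
    fix m assume m: "m \<in> partition_vecs n"
    have le: "m i \<le> n" for i
    proof (cases "1 \<le> i \<and> i \<le> n")
      case True
      have "m i \<le> i * m i" using True by simp
      also have "\<dots> \<le> n" using PV_le[OF m] True by auto
      finally show ?thesis .
    next
      case False
      hence "i = 0 \<or> n < i" by auto
      thus ?thesis
      proof
        assume "i = 0" thus ?thesis using m by (auto simp: partition_vecs_def)
      next
        assume "n < i" thus ?thesis using m by (auto simp: partition_vecs_def)
      qed
    qed
    have "m = (\<lambda>i. if i \<le> n then restrict m {..n} i else 0)"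
      using m by (auto simp: partition_vecs_def)
    moreover have "restrict m {..n} \<in> {..n} \<rightarrow>\<^sub>E {..n}" using le by auto
    ultimately show "m \<in> (\<lambda>f i. if i \<le> n then f i else 0) ` ({..n} \<rightarrow>\<^sub>E {..n})" by blast
  qed
  thus ?thesis by (rule finite_subset) (intro finite_imageI finite_PiE, auto)
qed

lemma le_mult_nz: "(c::nat) \<noteq> 0 \<Longrightarrow> i \<le> i * c" by simp

lemma wsum_upd:
  fixes n j v :: nat and f :: "nat \<Rightarrow> nat"
  assumes "j \<in> {1..n}"
  shows "(\<Sum>i=1..n. i * (f(j := v)) i) + j * f j = (\<Sum>i=1..n. i * f i) + j * v"
proof -
  have fin: "finite {1..n::nat}" by simp
  have A: "(\<Sum>i\<in>{1..n}-{j}. i * (f(j := v)) i) = (\<Sum>i\<in>{1..n}-{j}. i * f i)" by (rule sum.cong) auto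
  have B: "(\<Sum>i=1..n. i * (f(j := v)) i) = j * v + (\<Sum>i\<in>{1..n}-{j}. i * (f(j := v)) i)"
    using sum.remove[OF fin assms, of "\<lambda>i. i * (f(j:=v)) i"] by simp
  have C: "(\<Sum>i=1..n. i * f i) = j * f j + (\<Sum>i\<in>{1..n}-{j}. i * f i)"
    using sum.remove[OF fin assms, of "\<lambda>i. i * f i"] by simp
  show ?thesis using A B C by simp
qed

lemma aux_field:
  fixes r jj s1 s2 F yj P :: real
  assumes "r \<noteq> 0" "jj \<noteq> 0"
  shows "jj * r * (s1 * s2 / (r * F) * (yj / jj * P)) = s2 * yj * (s1 / F * P)"
  using assms by (cases "F = 0") (auto simp: field_simps)

lemma cterm_update:
  assumes j: "1 \<le> j" "j \<le> n" and m': "m' \<in> partition_vecs (n - j)"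
  shows "real j * real (m' j + 1) * cterm n y (m'(j := m' j + 1)) = (-1)^(j-1) * y j * cterm (n-j) y m'"
proof -
  let ?m = "m'(j := m' j + 1)"
  have ext: "cterm n y m' = cterm (n-j) y m'"
    by (rule cterm_ext) (use m' in \<open>auto simp: partition_vecs_def\<close>)
  have jin: "j \<in> {1..n}" using j by auto
  have s: "(\<Sum>i\<in>{i\<in>{1..n}. even i}. ?m i) = (\<Sum>i\<in>{i\<in>{1..n}. even i}. m' i) + (if even j then 1 else 0)"
  proof -
    have "(\<Sum>i\<in>{i\<in>{1..n}. even i}. ?m i) = (\<Sum>i\<in>{i\<in>{1..n}. even i}. m' i + (if i = j then 1 else 0))"
      by (rule sum.cong) auto
    also have "\<dots> = (\<Sum>i\<in>{i\<in>{1..n}. even i}. m' i) + (if even j then 1 else 0)"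
      using jin by (simp add: sum.distrib)
    finally show ?thesis .
  qed
  have f: "(\<Prod>i=1..n. fact (?m i) :: real) = real (m' j + 1) * (\<Prod>i=1..n. fact (m' i))"
  proof -
    have A: "(\<Prod>i\<in>{1..n}-{j}. fact (?m i) :: real) = (\<Prod>i\<in>{1..n}-{j}. fact (m' i))" by (rule prod.cong) auto
    have B: "(\<Prod>i=1..n. fact (?m i) :: real) = fact (m' j + 1) * (\<Prod>i\<in>{1..n}-{j}. fact (?m i))"
      using prod.remove[of "{1..n}" j "\<lambda>i. fact (?m i) :: real"] jin by simp
    have C: "(\<Prod>i=1..n. fact (m' i) :: real) = fact (m' j) * (\<Prod>i\<in>{1..n}-{j}. fact (m' i))"
      using prod.remove[of "{1..n}" j "\<lambda>i. fact (m' i) :: real"] jin by simp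
    show ?thesis using A B C by (simp add: fact_Suc)
  qed
  have p: "(\<Prod>i=1..n. (y i / real i) ^ (?m i)) = (y j / real j) * (\<Prod>i=1..n. (y i / real i) ^ (m' i))"
  proof -
    have A: "(\<Prod>i\<in>{1..n}-{j}. (y i / real i) ^ (?m i)) = (\<Prod>i\<in>{1..n}-{j}. (y i / real i) ^ (m' i))" by (rule prod.cong) auto
    have B: "(\<Prod>i=1..n. (y i / real i) ^ (?m i)) = (y j / real j) ^ (m' j + 1) * (\<Prod>i\<in>{1..n}-{j}. (y i / real i) ^ (?m i))"
      using prod.remove[of "{1..n}" j "\<lambda>i. (y i / real i) ^ (?m i)"] jin by simp
    have C: "(\<Prod>i=1..n. (y i / real i) ^ (m' i)) = (y j / real j) ^ (m' j) * (\<Prod>i\<in>{1..n}-{j}. (y i / real i) ^ (m' i))"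
      using prod.remove[of "{1..n}" j "\<lambda>i. (y i / real i) ^ (m' i)"] jin by simp
    show ?thesis using A B C by simp
  qed
  have sg: "(-1::real)^(if even j then 1 else 0) = (-1)^(j-1)" using j by (cases j) auto
  have jpos: "real j \<noteq> 0" using j by simp
  show ?thesis
    unfolding ext[symmetric] unfolding cterm_def s f p power_add sg
    by (rule aux_field) (use jpos in auto)
qed

lemma Pn_rec:
  assumes "1 \<le> n"
  shows "real n * Pn n y = (\<Sum>j=1..n. (-1)^(j-1) * y j * Pn (n-j) y)"
proof -
  have "real n * Pn n y = (\<Sum>m\<in>partition_vecs n. real n * cterm n y m)"
    by (simp add: Pn_cterm sum_distrib_left)
  also have "\<dots> = (\<Sum>m\<in>partition_vecs n. \<Sum>j=1..n. real j * real (m j) * cterm n y m)"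
  proof (rule sum.cong[OF refl])
    fix m assume "m \<in> partition_vecs n"
    hence "(\<Sum>i=1..n. i * m i) = n" by (simp add: partition_vecs_def)
    hence "real n = real (\<Sum>i=1..n. i * m i)" by simp
    also have "\<dots> = (\<Sum>j=1..n. real j * real (m j))" by simp
    finally have "real n = (\<Sum>j=1..n. real j * real (m j))" .
    thus "real n * cterm n y m = (\<Sum>j=1..n. real j * real (m j) * cterm n y m)"
      by (simp add: sum_distrib_right)
  qed
  also have "\<dots> = (\<Sum>j=1..n. \<Sum>m\<in>partition_vecs n. real j * real (m j) * cterm n y m)"
    by (rule sum.swap)
  also have "\<dots> = (\<Sum>j=1..n. (-1)^(j-1) * y j * Pn (n-j) y)"
  proof (rule sum.cong[OF refl])
    fix j assume jin: "j \<in> {1..n}"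
    have "(\<Sum>m\<in>partition_vecs n. real j * real (m j) * cterm n y m)
        = (\<Sum>m\<in>{m\<in>partition_vecs n. 1 \<le> m j}. real j * real (m j) * cterm n y m)"
      by (rule sum.mono_neutral_right) (auto simp: finite_PV)
    also have "\<dots> = (\<Sum>m'\<in>partition_vecs (n-j). (-1)^(j-1) * y j * cterm (n-j) y m')"
    proof (rule sym, rule sum.reindex_bij_witness[of _ "\<lambda>m. m(j := m j - 1)" "\<lambda>m'. m'(j := m' j + 1)"])
      fix a assume a: "a \<in> partition_vecs (n-j)"
      show "(a(j := a j + 1))(j := (a(j := a j + 1)) j - 1) = a" by simp
      show "real j * real ((a(j := a j + 1)) j) * cterm n y (a(j := a j + 1)) = (-1)^(j-1) * y j * cterm (n-j) y a"
        using cterm_update[of j n a y] jin a by simp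
      have van: "\<forall>i. (i < 1 \<or> n - j < i) \<longrightarrow> a i = 0" and sa: "(\<Sum>i=1..n-j. i * a i) = n - j"
        using a by (auto simp: partition_vecs_def)
      have "(\<Sum>i=1..n. i * a i) = (\<Sum>i=1..n-j. i * a i)"
        by (rule sum.mono_neutral_right) (use van in auto)
      hence "(\<Sum>i=1..n. i * (a(j := a j + 1)) i) = n"
        using wsum_upd[OF jin, of a "a j + 1"] sa jin by auto
      moreover have "\<forall>i. (i < 1 \<or> n < i) \<longrightarrow> (a(j := a j + 1)) i = 0" using van jin by auto
      ultimately show "a(j := a j + 1) \<in> {m \<in> partition_vecs n. 1 \<le> m j}"
        by (simp add: partition_vecs_def)
    next
      fix b assume b: "b \<in> {m \<in> partition_vecs n. 1 \<le> m j}"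
      have bb: "b \<in> partition_vecs n \<and> 1 \<le> b j" using b by (rule CollectD)
      have bP: "b \<in> partition_vecs n" using bb by (rule conjunct1)
      have bj: "1 \<le> b j" using bb by (rule conjunct2)
      show "(b(j := b j - 1))(j := (b(j := b j - 1)) j + 1) = b"
      proof -
        have "b j - 1 + 1 = b j" using bj by linarith
        thus ?thesis by (simp only: fun_upd_upd fun_upd_same fun_upd_triv)
      qed
      let ?b = "b(j := b j - 1)"
      have bP': "(\<forall>i. (i < 1 \<or> n < i) \<longrightarrow> b i = 0) \<and> (\<Sum>i=1..n. i * b i) = n"
        using bP unfolding partition_vecs_def mem_Collect_eq .
      have vb: "\<forall>i. (i < 1 \<or> n < i) \<longrightarrow> b i = 0" using bP' by (rule conjunct1)
      have sb: "(\<Sum>i=1..n. i * b i) = n" using bP' by (rule conjunct2)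
      have w: "(\<Sum>i=1..n. i * ?b i) + j * b j = (\<Sum>i=1..n. i * b i) + j * (b j - 1)"
        by (rule wsum_upd[OF jin])
      have jb: "j * b j = j * (b j - 1) + j" using bj by (cases "b j") auto
      have s1: "(\<Sum>i=1..n. i * ?b i) = n - j"
        using w jb sb by linarith
      have vb': "?b i = 0" if "i < 1 \<or> n - j < i" for i
      proof (cases "i \<in> {1..n}")
        case True
        show ?thesis
        proof (rule ccontr)
          assume nz: "?b i \<noteq> 0"
          have "i \<le> i * ?b i" by (rule le_mult_nz[OF nz])
          also have "i * ?b i \<le> (\<Sum>i=1..n. i * ?b i)" by (rule member_le_sum) (use True in auto)
          also have "\<dots> = n - j" by (rule s1)
          finally have ile: "i \<le> n - j" .
          have i1: "1 \<le> i" using True by simp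
          show False using that ile i1 by arith
        qed
      next
        case False
        have ij: "i \<noteq> j" using False jin by auto
        have "i < 1 \<or> n < i" using False by auto
        hence "b i = 0" by (rule vb[rule_format])
        thus ?thesis by (simp only: fun_upd_other[OF ij])
      qed
      have "(\<Sum>i=1..n. i * ?b i) = (\<Sum>i=1..n-j. i * ?b i)"
      proof (rule sum.mono_neutral_right)
        show "\<forall>i\<in>{1..n} - {1..n - j}. i * ?b i = 0"
        proof
          fix i assume "i \<in> {1..n} - {1..n - j}"
          hence "n - j < i" by auto
          hence "?b i = 0" by (intro vb' disjI2)
          thus "i * ?b i = 0" by simp
        qed
      qed auto
      hence s2: "(\<Sum>i=1..n-j. i * ?b i) = n - j" using s1 by simp
      have v2: "\<forall>i. (i < 1 \<or> n - j < i) \<longrightarrow> ?b i = 0" by (intro allI impI vb')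
      show "?b \<in> partition_vecs (n-j)" unfolding partition_vecs_def mem_Collect_eq using v2 s2 by (rule conjI)
    qed
    also have "\<dots> = (-1)^(j-1) * y j * Pn (n-j) y" by (simp add: Pn_cterm sum_distrib_left)
    finally show "(\<Sum>m\<in>partition_vecs n. real j * real (m j) * cterm n y m) = (-1)^(j-1) * y j * Pn (n-j) y" .
  qed
  finally show ?thesis .
qed

lemma Pn_0: "Pn 0 y = 1"
proof -
  have "partition_vecs 0 = {\<lambda>_. 0}" by (auto simp: partition_vecs_def)
  thus ?thesis by (simp add: Pn_def)
qed


fun e :: "nat \<Rightarrow> nat \<Rightarrow> real" where
  "e 0 m = 1"
| "e (Suc k) 0 = 0"
| "e (Suc k) (Suc m) = e (Suc k) m + e k m / real (Suc m)"

lemma e_nonneg: "0 \<le> e k m"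
  by (induction k m rule: e.induct) auto

definition EE :: "nat \<Rightarrow> real fps" where "EE m = Abs_fps (\<lambda>k. e k m)"
definition QQ :: "nat \<Rightarrow> real fps" where "QQ m = Abs_fps (\<lambda>i. (-1)^i * gen_harm (Suc i) m)"

lemma gen_harm_0: "gen_harm r 0 = 0" by (simp add: gen_harm_def)
lemma gen_harm_Suc: "gen_harm r (Suc m) = gen_harm r m + 1 / real (Suc m) ^ r"
  by (simp add: gen_harm_def)

lemma EE_Suc: "EE (Suc m) = (1 + fps_const (1 / real (Suc m)) * fps_X) * EE m"
proof (rule fps_ext)
  fix n
  show "fps_nth (EE (Suc m)) n = fps_nth ((1 + fps_const (1 / real (Suc m)) * fps_X) * EE m) n"
    by (cases n) (simp_all add: EE_def distrib_right mult.assoc)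
qed

lemma R_inv: "Abs_fps (\<lambda>i. (- x)^i) * (1 + fps_const x * fps_X) = (1::real fps)"
proof -
  have "Abs_fps (\<lambda>i. (- x)^i) * (1 + fps_const x * fps_X)
      = Abs_fps (\<lambda>i. (- x)^i) + fps_const x * (fps_X * Abs_fps (\<lambda>i. (- x)^i))"
    by (simp add: algebra_simps)
  also have "\<dots> = 1"
  proof (rule fps_ext)
    fix n show "fps_nth (Abs_fps (\<lambda>i. (- x)^i) + fps_const x * (fps_X * Abs_fps (\<lambda>i. (- x)^i))) n = fps_nth (1::real fps) n"
      by (cases n) simp_all
  qed
  finally show ?thesis .
qed

lemma pow_aux: fixes x :: real and n :: nat
  shows "(1 / x) * (- (1 / x))^n = (-1)^n * (1 / x ^ Suc n)"
proof -
  have "(1 / x) * (- (1 / x))^n = (1/x) * ((-1)^n * (1/x)^n)" by (rule arg_cong[where f="\<lambda>t. (1/x) * t"], rule power_minus)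
  also have "\<dots> = (-1)^n * ((1/x) * (1/x)^n)" by (simp only: mult_ac)
  also have "(1/x) * (1/x)^n = (1/x)^Suc n" by (simp only: power_Suc)
  also have "\<dots> = 1 / x ^ Suc n" by (rule power_one_over)
  finally show ?thesis .
qed

lemma QQ_Suc: "QQ (Suc m) = QQ m + fps_const (1 / real (Suc m)) * Abs_fps (\<lambda>i. (- (1 / real (Suc m)))^i)"
proof (rule fps_ext)
  fix n
  show "fps_nth (QQ (Suc m)) n = fps_nth (QQ m + fps_const (1 / real (Suc m)) * Abs_fps (\<lambda>i. (- (1 / real (Suc m)))^i)) n"
    by (simp only: fps_add_nth fps_mult_left_const_nth fps_nth_Abs_fps QQ_def pow_aux gen_harm_Suc distrib_left)
qed

lemma EE_deriv: "fps_deriv (EE m) = QQ m * EE m"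
proof (induction m)
  case 0
  have "EE 0 = 1"
  proof (rule fps_ext)
    fix n show "fps_nth (EE 0) n = fps_nth (1::real fps) n" by (cases n) (simp_all add: EE_def)
  qed
  moreover have "QQ 0 = 0" by (rule fps_ext) (simp add: QQ_def gen_harm_0)
  ultimately show ?case by simp
next
  case (Suc m)
  define c where "c = 1 / real (Suc m)"
  define R where "R = (Abs_fps (\<lambda>i. (- c)^i) :: real fps)"
  have R: "R * (1 + fps_const c * fps_X) = 1" unfolding R_def by (rule R_inv)
  have es: "EE (Suc m) = (1 + fps_const c * fps_X) * EE m" unfolding c_def by (rule EE_Suc)
  have qs: "QQ (Suc m) = QQ m + fps_const c * R" unfolding c_def R_def by (rule QQ_Suc)
  have "fps_deriv (EE (Suc m)) = fps_const c * EE m + (1 + fps_const c * fps_X) * (QQ m * EE m)"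
    by (simp add: es Suc.IH algebra_simps)
  also have "\<dots> = QQ m * ((1 + fps_const c * fps_X) * EE m) + fps_const c * (R * (1 + fps_const c * fps_X)) * EE m"
    by (subst R) (simp add: algebra_simps)
  also have "\<dots> = QQ (Suc m) * EE (Suc m)"
    by (simp add: qs es algebra_simps)
  finally show ?case .
qed

lemma e_newton:
  "real (Suc k) * e (Suc k) m = (\<Sum>j=1..Suc k. (-1)^(j-1) * gen_harm j m * e (Suc k - j) m)"
proof -
  have "real (Suc k) * e (Suc k) m = fps_nth (fps_deriv (EE m)) k" by (simp add: EE_def)
  also have "\<dots> = (\<Sum>i=0..k. (-1)^i * gen_harm (Suc i) m * e (k - i) m)"
    by (simp only: EE_deriv) (simp add: fps_mult_nth QQ_def EE_def)
  also have "\<dots> = (\<Sum>j=Suc 0..Suc k. (-1)^(j-1) * gen_harm j m * e (Suc k - j) m)"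
    by (subst sum.shift_bounds_cl_Suc_ivl) simp
  finally show ?thesis by simp
qed


definition rf :: "nat \<Rightarrow> nat \<Rightarrow> real" where "rf m q = (\<Prod>i<q. real (m + i))"

lemma rf_0: "rf m 0 = 1" by (simp add: rf_def)
lemma rf_Suc: "rf m (Suc q) = rf m q * real (m + q)" by (simp add: rf_def)
lemma rf_Suc': "rf m (Suc q) = real m * rf (Suc m) q"
  unfolding rf_def prod.lessThan_Suc_shift by simp
lemma rf_ge1: "1 \<le> m \<Longrightarrow> 1 \<le> rf m q"
  unfolding rf_def by (rule prod_ge_1) auto
lemma rf_pos: "1 \<le> m \<Longrightarrow> 0 < rf m q"
  using rf_ge1[of m q] by linarith
lemma rf_1: "rf 1 q = fact q"
  by (induction q) (simp_all add: rf_0 rf_Suc)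
lemma rf_1': "rf (Suc 0) q = fact q" using rf_1 by simp

lemma tel_step:
  assumes "1 \<le> m"
  shows "1 / rf m r - 1 / rf (Suc m) r = real r / rf m (Suc r)"
proof -
  have A: "0 < rf m r" "0 < rf (Suc m) r" using rf_pos assms by auto
  have B: "rf m (Suc r) = rf m r * real (m + r)" by (rule rf_Suc)
  have C: "rf m (Suc r) = real m * rf (Suc m) r" by (rule rf_Suc')
  have D: "0 < real m" using assms by simp
  have D2: "0 < real (m + r)" using D by simp
  have X1: "real (m + r) / rf m (Suc r) = 1 / rf m r" unfolding B using A D2 by simp
  have X2: "real m / rf m (Suc r) = 1 / rf (Suc m) r" unfolding C using A D by simp
  have "real r / rf m (Suc r) = real (m + r) / rf m (Suc r) - real m / rf m (Suc r)"
    by (simp add: diff_divide_distrib[symmetric])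
  thus ?thesis unfolding X1 X2 by simp
qed

lemma alg1:
  fixes a b A B x S :: real
  assumes "A \<noteq> 0" "B \<noteq> 0" "x \<noteq> 0"
  shows "S - a/A + (a + b/x)*(1/A - 1/B) = S + b/(x*A) - (a + b/x)/B"
  using assms by (simp add: field_simps)

definition u :: "nat \<Rightarrow> nat \<Rightarrow> nat \<Rightarrow> real" where "u k q n = e k n / rf (Suc n) q"

lemma u_nonneg: "0 \<le> u k q n"
  unfolding u_def using e_nonneg rf_pos[of "Suc n" q] by simp

lemma partial0:
  assumes "1 \<le> r"
  shows "real r * (\<Sum>n<N. u 0 (Suc r) n) = 1 / rf 1 r - 1 / rf (Suc N) r"
proof (induction N)
  case 0 thus ?case by simp
next
  case (Suc N)
  have "real r * (\<Sum>n<Suc N. u 0 (Suc r) n) = real r * (\<Sum>n<N. u 0 (Suc r) n) + real r / rf (Suc N) (Suc r)"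
    by (simp add: u_def distrib_left)
  also have "\<dots> = 1 / rf 1 r - 1 / rf (Suc (Suc N)) r"
    using Suc.IH tel_step[of "Suc N" r] by simp
  finally show ?case .
qed

lemma partialS:
  assumes "1 \<le> r"
  shows "real r * (\<Sum>n<Suc N. u (Suc j) (Suc r) n) = (\<Sum>n<N. u j (Suc r) n) - e (Suc j) N / rf (Suc (Suc N)) r"
proof (induction N)
  case 0 thus ?case by (simp add: u_def)
next
  case (Suc N)
  define a where "a = e (Suc j) N"
  define b where "b = e j N"
  define A where "A = rf (Suc (Suc N)) r"
  define B where "B = rf (Suc (Suc (Suc N))) r"
  define P where "P = rf (Suc (Suc N)) (Suc r)"
  have Q: "rf (Suc N) (Suc r) = real (Suc N) * A" unfolding A_def by (rule rf_Suc')
  have T: "real r / P = 1 / A - 1 / B" unfolding P_def A_def B_def using tel_step[of "Suc (Suc N)" r] by simp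
  have E: "e (Suc j) (Suc N) = a + b / real (Suc N)" by (simp add: a_def b_def)
  have uS: "u (Suc j) (Suc r) (Suc N) = (a + b / real (Suc N)) / P" unfolding u_def E P_def ..
  have Ap: "0 < A" unfolding A_def by (rule rf_pos) simp
  have Bp: "0 < B" unfolding B_def by (rule rf_pos) simp
  have Np: "0 < 1 + real N" by simp
  have "real r * (\<Sum>n<Suc (Suc N). u (Suc j) (Suc r) n)
      = real r * (\<Sum>n<Suc N. u (Suc j) (Suc r) n) + (a + b / real (Suc N)) * (real r / P)"
  proof -
    have c: "real r * ((a + b / real (Suc N)) / P) = (a + b / real (Suc N)) * (real r / P)"
      by (metis mult.commute times_divide_eq_right)
    show ?thesis by (simp only: sum.lessThan_Suc uS distrib_left c)
  qed
  also have "\<dots> = (\<Sum>n<N. u j (Suc r) n) - a / A + (a + b / real (Suc N)) * (1 / A - 1 / B)"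
    unfolding T Suc.IH a_def A_def by simp
  also have "\<dots> = (\<Sum>n<N. u j (Suc r) n) + b / (real (Suc N) * A) - (a + b / real (Suc N)) / B"
    by (rule alg1) (use Ap Bp in auto)
  also have "\<dots> = (\<Sum>n<Suc N. u j (Suc r) n) - e (Suc j) (Suc N) / rf (Suc (Suc (Suc N))) r"
    by (simp add: u_def Q b_def E B_def a_def)
  finally show ?case .
qed

lemma U_sums:
  assumes r: "1 \<le> r"
  shows "u k (Suc r) sums (1 / (fact r * real r ^ Suc k))"
proof (induction k)
  case 0
  have lim: "(\<lambda>N. 1 / rf (Suc N) r) \<longlonglongrightarrow> 0"
  proof (rule tendsto_sandwich[of "\<lambda>_. 0" _ _ "\<lambda>N. 1 / real (Suc N)"])
    show "\<forall>\<^sub>F N in sequentially. 0 \<le> 1 / rf (Suc N) r"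
      using rf_pos by (auto intro!: always_eventually less_imp_le)
    have "1 / rf (Suc N) r \<le> 1 / real (Suc N)" for N
    proof -
      obtain r' where r': "r = Suc r'" using r by (cases r) auto
      have "real (Suc N) \<le> rf (Suc N) r"
        unfolding r' rf_Suc' using rf_ge1[of "Suc (Suc N)" r'] by simp
      thus ?thesis by (simp add: frac_le)
    qed
    thus "\<forall>\<^sub>F N in sequentially. 1 / rf (Suc N) r \<le> 1 / real (Suc N)" by (auto intro!: always_eventually)
    show "(\<lambda>N. 1 / real (Suc N)) \<longlonglongrightarrow> 0" by (rule LIMSEQ_Suc[OF lim_const_over_n])
  qed auto
  have "(\<lambda>N. (1 / rf 1 r - 1 / rf (Suc N) r) / real r) \<longlonglongrightarrow> (1 / rf 1 r - 0) / real r"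
    by (intro tendsto_intros lim) (use r in auto)
  moreover have "(\<Sum>n<N. u 0 (Suc r) n) = (1 / rf 1 r - 1 / rf (Suc N) r) / real r" for N
    using partial0[OF r, of N] r by (simp add: field_simps)
  ultimately show ?case unfolding sums_def by (simp add: rf_1')
next
  case (Suc j)
  define Uj where "Uj = 1 / (fact r * real r ^ Suc j)"
  have IH: "u j (Suc r) sums Uj" using Suc.IH by (simp add: Uj_def)
  have rpos: "0 < real r" using r by simp
  have bnd: "(\<Sum>n<Suc N. u (Suc j) (Suc r) n) \<le> Uj / real r" for N
  proof -
    have "real r * (\<Sum>n<Suc N. u (Suc j) (Suc r) n) \<le> (\<Sum>n<N. u j (Suc r) n)"
      unfolding partialS[OF r] using e_nonneg rf_pos[of "Suc (Suc N)" r] by simp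
    also have "\<dots> \<le> Uj"
      using sum_le_suminf[of "u j (Suc r)" "{..<N}"] IH u_nonneg by (auto simp: sums_iff)
    finally show ?thesis using rpos by (simp add: field_simps)
  qed
  have summ: "summable (u (Suc j) (Suc r))"
    by (rule bounded_imp_summable[of _ "Uj / real r"]) (use u_nonneg bnd in \<open>auto simp: lessThan_Suc_atMost[symmetric]\<close>)
  define U' where "U' = suminf (u (Suc j) (Suc r))"
  define b where "b = (\<lambda>N. e (Suc j) N / rf (Suc (Suc N)) r)"
  have beq: "b N = (\<Sum>n<N. u j (Suc r) n) - real r * (\<Sum>n<Suc N. u (Suc j) (Suc r) n)" for N
    unfolding b_def partialS[OF r] by simp
  have blim: "b \<longlonglongrightarrow> Uj - real r * U'"
  proof -
    have "(\<lambda>N. (\<Sum>n<N. u j (Suc r) n) - real r * (\<Sum>n<Suc N. u (Suc j) (Suc r) n)) \<longlonglongrightarrow> Uj - real r * U'"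
      apply (intro tendsto_intros)
      using IH apply (simp add: sums_def)
      using summ unfolding U'_def by (intro LIMSEQ_Suc) (simp add: summable_LIMSEQ)
    moreover have bfun: "b = (\<lambda>N. (\<Sum>n<N. u j (Suc r) n) - real r * (\<Sum>n<Suc N. u (Suc j) (Suc r) n))"
      using beq by (intro ext)
    ultimately show ?thesis by (simp only: bfun)
  qed
  have bnn: "0 \<le> b N" for N unfolding b_def using e_nonneg rf_pos[of "Suc (Suc N)" r] by simp
  have L0: "Uj - real r * U' = 0"
  proof (rule ccontr)
    assume ne: "Uj - real r * U' \<noteq> 0"
    define L where "L = Uj - real r * U'"
    have blim': "b \<longlonglongrightarrow> L" unfolding L_def by (rule blim)
    have "0 \<le> L" by (rule LIMSEQ_le_const[OF blim']) (use bnn in auto)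
    with ne have Lpos0: "0 < L" unfolding L_def by simp
    have "\<forall>\<^sub>F N in sequentially. L / 2 < b N"
      by (rule order_tendstoD(1)[OF blim']) (use Lpos0 in simp)
    hence ev: "\<forall>\<^sub>F N in sequentially. norm (inverse (real (Suc N))) \<le> (2 / L) * u (Suc j) (Suc r) N"
    proof (rule eventually_mono)
      fix N assume "L / 2 < b N"
      have ueq: "u (Suc j) (Suc r) N = b N / real (Suc N)"
        unfolding u_def b_def rf_Suc' by simp
      have "inverse (real (Suc N)) = (2 / L) * ((L / 2) / real (Suc N))" using Lpos0 by (simp add: field_simps)
      also have "\<dots> \<le> (2 / L) * (b N / real (Suc N))"
        using \<open>L / 2 < b N\<close> Lpos0 by (intro mult_left_mono divide_right_mono) auto
      finally show "norm (inverse (real (Suc N))) \<le> (2 / L) * u (Suc j) (Suc r) N" using ueq by simp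
    qed
    have "summable (\<lambda>N. inverse (real (Suc N)))"
      by (rule summable_comparison_test_ev[OF ev summable_mult[OF summ]])
    hence "summable (\<lambda>N. inverse (real N) :: real)" by (subst (asm) summable_Suc_iff)
    thus False using not_summable_harmonic by blast
  qed
  have "U' = Uj / real r" using L0 rpos by (simp add: field_simps)
  moreover have "u (Suc j) (Suc r) sums U'" unfolding U'_def by (rule summable_sums[OF summ])
  ultimately have "u (Suc j) (Suc r) sums (Uj / real r)" by simp
  thus ?case by (simp add: Uj_def mult_ac)
qed

lemma Pn_e: "Pn k (\<lambda>r. gen_harm r m) = e k m"
proof (induction k rule: less_induct)
  case (less k)
  show ?case
  proof (cases k)
    case 0 thus ?thesis by (simp add: Pn_0)
  next
    case (Suc k')
    have "real k * Pn k (\<lambda>r. gen_harm r m)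
        = (\<Sum>j=1..k. (-1)^(j-1) * gen_harm j m * Pn (k-j) (\<lambda>r. gen_harm r m))"
      using Pn_rec[of k "\<lambda>r. gen_harm r m"] Suc by simp
    also have "\<dots> = (\<Sum>j=1..k. (-1)^(j-1) * gen_harm j m * e (k-j) m)"
    proof (rule sum.cong[OF refl])
      fix j assume "j \<in> {1..k}"
      hence "k - j < k" by auto
      thus "(-1)^(j-1) * gen_harm j m * Pn (k-j) (\<lambda>r. gen_harm r m) = (-1)^(j-1) * gen_harm j m * e (k-j) m"
        by (simp add: less.IH)
    qed
    also have "\<dots> = real k * e k m" using e_newton[of k' m] Suc by simp
    finally show ?thesis using Suc by simp
  qed
qed

definition t :: "nat \<Rightarrow> nat \<Rightarrow> nat \<Rightarrow> real" where "t k q n = e k (Suc n) / rf (Suc n) q"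

lemma t_nonneg: "0 \<le> t k q n"
  unfolding t_def using e_nonneg rf_pos[of "Suc n" q] by simp

lemma U_shift:
  assumes "1 \<le> k" "2 \<le> q"
  shows "(\<lambda>n. u k q (Suc n)) sums (1 / (fact (q - 1) * real (q - 1) ^ Suc k))"
proof -
  obtain r where r: "q = Suc r" "1 \<le> r" using assms by (cases q) auto
  obtain k' where k': "k = Suc k'" using assms by (cases k) auto
  have "u k q sums (1 / (fact (q - 1) * real (q - 1) ^ Suc k))"
    using U_sums[OF r(2), of k] r by simp
  moreover have "u k q 0 = 0" by (simp add: u_def k')
  ultimately show ?thesis by (simp add: sums_Suc_iff)
qed

lemma cancel_aux:
  fixes c a X :: real
  assumes "c \<noteq> 0"
  shows "c * (a / (c * X)) = a / X"
  using assms by (cases "X = 0") (simp_all add: field_simps)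

lemma alg2:
  fixes e X s m q :: real
  assumes "X \<noteq> 0" "s \<noteq> 0" "m \<noteq> 0" "s = m + q"
  shows "e / X - q * (e / (X * s)) = e / (X * s / m)"
proof -
  have es: "e * s = e * m + e * q" using assms(4) by (simp add: distrib_left)
  show ?thesis using assms(1-3) es by (simp add: field_simps)
qed

lemma t_facts:
  fixes k q n :: nat
  defines "X \<equiv> rf (Suc n) q" and "Y \<equiv> rf (Suc (Suc n)) q"
  shows "t k q n \<le> (real q + 1) * u k q (Suc n)"
    and "t k q n - real q * t k (Suc q) n = u k q (Suc n)"
proof -
  have Xp: "0 < X" unfolding X_def by (rule rf_pos) simp
  have Yp: "0 < Y" unfolding Y_def by (rule rf_pos) simp
  have XY: "real (Suc n) * Y = X * real (Suc n + q)"
    unfolding X_def Y_def using rf_Suc[of "Suc n" q] rf_Suc'[of "Suc n" q] by simp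
  have X1: "rf (Suc n) (Suc q) = X * real (Suc n + q)" unfolding X_def by (rule rf_Suc)
  have ee: "0 \<le> e k (Suc n)" by (rule e_nonneg)
  have "X * real (Suc n + q) \<le> X * ((real q + 1) * real (Suc n))"
    by (rule mult_left_mono) (use Xp in \<open>auto simp: algebra_simps\<close>)
  hence "real (Suc n) * Y \<le> real (Suc n) * ((real q + 1) * X)" using XY by (simp add: mult_ac)
  hence Yle: "Y \<le> (real q + 1) * X" by (subst (asm) mult_le_cancel_left_pos) auto
  have "e k (Suc n) / ((real q + 1) * X) \<le> e k (Suc n) / Y"
    by (rule frac_le) (use ee Yp Yle in auto)
  hence "(real q + 1) * (e k (Suc n) / ((real q + 1) * X)) \<le> (real q + 1) * (e k (Suc n) / Y)"
    by (rule mult_left_mono) simp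
  moreover have "(real q + 1) * (e k (Suc n) / ((real q + 1) * X)) = e k (Suc n) / X"
    by (rule cancel_aux) simp
  ultimately show "t k q n \<le> (real q + 1) * u k q (Suc n)"
    unfolding t_def u_def X_def Y_def by simp
  have "e k (Suc n) / X - real q * (e k (Suc n) / (X * real (Suc n + q))) = e k (Suc n) / Y"
  proof -
    have Yeq: "Y = X * real (Suc n + q) / real (Suc n)" using XY by (simp add: field_simps)
    show ?thesis unfolding Yeq by (rule alg2) (use Xp in auto)
  qed
  thus "t k q n - real q * t k (Suc q) n = u k q (Suc n)"
    unfolding t_def u_def X1 X_def Y_def .
qed

lemma t_summable:
  assumes "1 \<le> k" "2 \<le> q"
  shows "summable (t k q)"
proof (rule summable_comparison_test[where g="\<lambda>n. (real q + 1) * u k q (Suc n)"])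
  show "\<exists>N. \<forall>n\<ge>N. norm (t k q n) \<le> (real q + 1) * u k q (Suc n)"
    using t_facts(1) t_nonneg by auto
  show "summable (\<lambda>n. (real q + 1) * u k q (Suc n))"
    by (rule summable_mult) (use U_shift[OF assms] in \<open>simp add: sums_iff\<close>)
qed

definition W :: "nat \<Rightarrow> nat \<Rightarrow> real" where "W k q = fact (q - 1) * suminf (t k q)"

lemma W_diff:
  assumes "1 \<le> k" "2 \<le> q"
  shows "W k q - W k (Suc q) = 1 / real (q - 1) ^ Suc k"
proof -
  have s1: "summable (t k q)" by (rule t_summable[OF assms])
  have s2: "summable (t k (Suc q))" by (rule t_summable) (use assms in auto)
  have "(\<lambda>n. t k q n - real q * t k (Suc q) n) sums (suminf (t k q) - real q * suminf (t k (Suc q)))"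
    by (intro sums_diff sums_mult summable_sums s1 s2)
  moreover have "(\<lambda>n. t k q n - real q * t k (Suc q) n) sums (1 / (fact (q - 1) * real (q - 1) ^ Suc k))"
    unfolding t_facts(2) by (rule U_shift[OF assms])
  ultimately have eq: "suminf (t k q) - real q * suminf (t k (Suc q)) = 1 / (fact (q - 1) * real (q - 1) ^ Suc k)"
    by (rule sums_unique2)
  obtain r where r: "q = Suc r" using assms by (cases q) auto
  have fq: "(fact (Suc q - 1) :: real) = real q * fact (q - 1)" using r by (simp add: fact_Suc)
  have "W k q - W k (Suc q) = fact (q - 1) * (suminf (t k q) - real q * suminf (t k (Suc q)))"
    unfolding W_def fq by (simp add: algebra_simps)
  also have "\<dots> = 1 / real (q - 1) ^ Suc k" unfolding eq by simp
  finally show ?thesis .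
qed

lemma fact_rf_bound:
  assumes "3 \<le> q" "1 \<le> m"
  shows "fact q / rf m q \<le> 6 / rf m 3"
  using assms(1)
proof (induction q rule: dec_induct)
  case base
  show ?case by (simp add: numeral_3_eq_3)
next
  case (step q)
  have rp: "0 < rf m q" by (rule rf_pos[OF assms(2)])
  have "fact (Suc q) / rf m (Suc q) = (fact q / rf m q) * (real (Suc q) / real (m + q))"
    by (simp add: rf_Suc fact_Suc)
  also have "\<dots> \<le> (fact q / rf m q) * 1"
    by (rule mult_left_mono) (use rp assms(2) in auto)
  also have "\<dots> \<le> 6 / rf m 3" using step.IH by simp
  finally show ?case .
qed

lemma W_bound:
  assumes "1 \<le> k" "3 \<le> q"
  shows "W k q \<le> (6 * suminf (t k 3)) / real q"
proof -
  have s3: "summable (t k 3)" by (rule t_summable) (use assms in auto)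
  have sq: "summable (t k q)" by (rule t_summable) (use assms in auto)
  have qp: "0 < real q" using assms by simp
  have tm: "fact (q - 1) * t k q n \<le> (6 / real q) * t k 3 n" for n
  proof -
    obtain r where r: "q = Suc r" using assms by (cases q) auto
    have fq: "(fact q :: real) = real q * fact (q - 1)" using r by (simp add: fact_Suc)
    have b: "fact q / rf (Suc n) q \<le> 6 / rf (Suc n) 3" by (rule fact_rf_bound) (use assms in auto)
    have "fact (q - 1) * t k q n = e k (Suc n) * (fact q / rf (Suc n) q) / real q"
      unfolding t_def fq using qp by (simp add: field_simps)
    also have "\<dots> \<le> e k (Suc n) * (6 / rf (Suc n) 3) / real q"
      by (intro divide_right_mono mult_left_mono b e_nonneg) (use qp in auto)
    also have "\<dots> = (6 / real q) * t k 3 n" unfolding t_def by (simp add: field_simps)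
    finally show ?thesis .
  qed
  have "W k q = (\<Sum>n. fact (q - 1) * t k q n)" unfolding W_def by (rule suminf_mult[OF sq, symmetric])
  also have "\<dots> \<le> (\<Sum>n. (6 / real q) * t k 3 n)"
    by (rule suminf_le[OF tm]) (intro summable_mult sq s3)+
  also have "\<dots> = (6 / real q) * suminf (t k 3)" by (rule suminf_mult[OF s3])
  finally show ?thesis by simp
qed

lemma W_lim:
  assumes "1 \<le> k"
  shows "W k \<longlonglongrightarrow> 0"
proof (rule tendsto_sandwich[of "\<lambda>_. 0" _ _ "\<lambda>q. (6 * suminf (t k 3)) / real q"])
  show "\<forall>\<^sub>F q in sequentially. 0 \<le> W k q"
  proof (rule eventually_sequentiallyI[of 2])
    fix q :: nat assume "2 \<le> q"
    have "0 \<le> suminf (t k q)" by (rule suminf_nonneg[OF t_summable]) (use assms \<open>2 \<le> q\<close> t_nonneg in auto)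
    thus "0 \<le> W k q" unfolding W_def by simp
  qed
  show "\<forall>\<^sub>F q in sequentially. W k q \<le> (6 * suminf (t k 3)) / real q"
    by (rule eventually_sequentiallyI[of 3]) (rule W_bound[OF assms])
  show "(\<lambda>q. (6 * suminf (t k 3)) / real q) \<longlonglongrightarrow> 0" by (rule lim_const_over_n)
qed auto

lemma W_sums:
  assumes "1 \<le> k" "2 \<le> q"
  shows "(\<lambda>i. 1 / real (i + q - 1) ^ Suc k) sums W k q"
proof -
  have "(\<lambda>i. W k (i + q)) \<longlonglongrightarrow> 0" by (rule LIMSEQ_ignore_initial_segment[OF W_lim[OF assms(1)]])
  hence "(\<lambda>i. W k (i + q) - W k (Suc i + q)) sums (W k (0 + q) - 0)"
    by (rule telescope_sums')
  moreover have "W k (i + q) - W k (Suc i + q) = 1 / real (i + q - 1) ^ Suc k" for i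
    using W_diff[OF assms(1), of "i + q"] assms by simp
  ultimately show ?thesis by simp
qed

lemma sum_shift1: "(\<Sum>j=1..N. f j) = (\<Sum>i<N. f (Suc i) :: real)"
  by (induction N) simp_all

theorem mainTheorem7:
  fixes k q :: nat
  assumes "k \<ge> 1" and "q \<ge> 2"
  shows "(\<lambda>n. Pn k (\<lambda>r. gen_harm r (Suc n)) / (\<Prod>i<q. real (Suc n + i)))
           sums (1 / fact (q - 1) * (zeta_nat (k + 1) - (\<Sum>j=1..q-2. 1 / (real j) ^ (k + 1))))"
proof -
  define f0 where "f0 = (\<lambda>j. 1 / real (Suc j) ^ (k + 1))"
  have f0s: "f0 sums W k 2" using W_sums[OF assms(1), of 2] by (simp add: f0_def)
  have zeta: "zeta_nat (k + 1) = suminf f0" by (simp add: zeta_nat_def f0_def)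
  have summ: "summable f0" using f0s by (simp add: sums_iff)
  have tail: "(\<lambda>i. f0 (i + (q - 2))) sums W k q"
  proof -
    have "f0 (i + (q - 2)) = 1 / real (i + q - 1) ^ Suc k" for i
      using assms by (simp add: f0_def Suc_diff_le)
    thus ?thesis using W_sums[OF assms] by simp
  qed
  have split: "suminf f0 = (\<Sum>i. f0 (i + (q - 2))) + (\<Sum>i<q - 2. f0 i)" by (rule suminf_split_initial_segment[OF summ])
  have A: "(\<Sum>j=1..q-2. 1 / (real j) ^ (k + 1)) = (\<Sum>i<q-2. f0 i)" unfolding sum_shift1 f0_def by simp
  have B: "(\<Sum>i. f0 (i + (q - 2))) = W k q" using sums_unique[OF tail] by simp
  have Wq: "W k q = zeta_nat (k + 1) - (\<Sum>j=1..q-2. 1 / (real j) ^ (k + 1))"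
    using split A B zeta by linarith
  have ts: "t k q sums suminf (t k q)" by (rule summable_sums[OF t_summable[OF assms]])
  have fpos: "(fact (q - 1) :: real) \<noteq> 0" by simp
  have "suminf (t k q) = 1 / fact (q - 1) * W k q" unfolding W_def using fpos by simp
  hence "t k q sums (1 / fact (q - 1) * (zeta_nat (k + 1) - (\<Sum>j=1..q-2. 1 / (real j) ^ (k + 1))))"
    using ts Wq by simp
  moreover have "(\<lambda>n. Pn k (\<lambda>r. gen_harm r (Suc n)) / (\<Prod>i<q. real (Suc n + i))) = t k q"
    by (rule ext) (simp add: t_def rf_def Pn_e)
  ultimately show ?thesis by simp
qed

end
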